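(* Assume A1 and A2, for a function $\rho:(0,1)\to(0,\infty)$ satisfying R2, R3 and R4. Let $(\tilde\theta_n,X_n)_{n\ge0}$ and $(\gamma_n)_{n\ge1}$ be generated by the WL$_\rho$ algorithm. If $(\gamma_n)_{n\ge1}$ is non-increasing, bounded from above by a deterministic sequence converging to $0$, and satisfies $\bar r_{d,\gamma}:=\sup_{n\ge1}\frac{\gamma_n}{\gamma_{n+d-1}}<+\infty$, then almost surely the sequence $(\theta_n)_{n\ge0}$ returns infinitely often to a compact subset of $\Theta$.
   Context: Let $\mathsf X\subset\mathbb R^D$ be measurable, $\lambda$ a nonnegative reference measure, $\pi$ a probability density on $\mathsf X$ w.r.t. $\lambda$. $\mathsf X=\bigcup_{i=1}^d\mathsf X_i$ is a partition into disjoint measurable strata, $I(x)=i$ iff $x\in\mathsf X_i$, $\theta_\star(i)=\int_{\mathsf X_i}\pi\,d\lambda$, $\Theta=\{\theta\in(0,1)^d:\sum_i\theta(i)=1\}$. For measurable $\rho:(0,1)\to(0,\infty)$ and $\theta\in\Theta$, $\pi^\rho_\theta(x)=(Z^\rho_\theta)^{-1}\sum_{i}\frac{\pi(x)}{\rho(\theta(i))}\mathbf 1_{\mathsf X_i}(x)$, $Z^\rho_\theta=\sum_i\frac{\theta_\star(i)}{\rho(\theta(i))}$. A1: $\sup_{\mathsf X}\pi<\infty$ and $\min_i\theta_\star(i)>0$. A2: for every $\theta\in\Theta$, $P^\rho_\theta$ is the Metropolis–Hastings kernel with symmetric proposal density $q(x,y)$ w.r.t. $\lambda$, $\inf_{\mathsf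 X^2}q>0$, and invariant distribution $\pi^\rho_\theta\,d\lambda$. R2: $\sup_{(0,1)}\rho<\infty$. R3: $\rho$ is non-decreasing on $(0,1)$ and there is $R>1$ with $\inf_{t\in(0,1/R)}\rho(t)/\rho(Rt)>0$. R4: $t\mapsto\rho(t)/t$ is non-increasing on $(0,1)$ and $\lim_{t\to0^+}\rho(t)/t=+\infty$. WL$_\rho$ algorithm: given a (possibly random) initial condition $(\tilde\theta_0,X_0)\in(0,\infty)^d\times\mathsf X$ and a (possibly random) sequence of positive stepsizes $(\gamma_n)_{n\ge1}$, for $n\ge0$: $S_n=\sum_i\tilde\theta_n(i)$, $\theta_n=\tilde\theta_n/S_n$; draw $X_{n+1}$, conditionally on $\sigma(\tilde\theta_0,X_0,\dots,X_n)$, from $P^\rho_{\theta_n}(X_n,\cdot)$; set $\tilde\theta_{n+1}(i)=\tilde\theta_n(i)\big(1+\gamma_{n+1}\frac{\rho(\theta_n(i))}{\theta_n(i)}\mathbf 1_{\mathsf X_i}(X_{n+1})\big)$. *)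

theory Defs
  imports "HOL-Probability.Probability"
begin

definition stratum :: "'a measure \<Rightarrow> ('a \<Rightarrow> 'd) \<Rightarrow> 'd \<Rightarrow> 'a set" where
  "stratum lam I i = {x \<in> space lam. I x = i}"

definition theta_star :: "'a measure \<Rightarrow> ('a \<Rightarrow> real) \<Rightarrow> ('a \<Rightarrow> 'd) \<Rightarrow> 'd \<Rightarrow> real" where
  "theta_star lam piX I i = (\<integral>x. indicator (stratum lam I i) x * piX x \<partial>lam)"

definition wl_Theta :: "(real ^ 'd::finite) set" where
  "wl_Theta = {th. (\<forall>i. 0 < th $ i \<and> th $ i < 1) \<and> (\<Sum>i\<in>UNIV. th $ i) = 1}"

definition bias_Z :: "'a measure \<Rightarrow> ('a \<Rightarrow> real) \<Rightarrow> ('a \<Rightarrow> 'd::finite) \<Rightarrow> (real \<Rightarrow> real)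
    \<Rightarrow> real ^ 'd \<Rightarrow> real" where
  "bias_Z lam piX I rho th = (\<Sum>i\<in>UNIV. theta_star lam piX I i / rho (th $ i))"

definition bias_density :: "'a measure \<Rightarrow> ('a \<Rightarrow> real) \<Rightarrow> ('a \<Rightarrow> 'd::finite) \<Rightarrow> (real \<Rightarrow> real)
    \<Rightarrow> real ^ 'd \<Rightarrow> 'a \<Rightarrow> real" where
  "bias_density lam piX I rho th x = piX x / rho (th $ I x) / bias_Z lam piX I rho th"

(* Metropolis-Hastings acceptance probability for target density p and symmetric proposal;
   convention: acceptance 1 if p x = 0 *)
definition mh_accept :: "('a \<Rightarrow> real) \<Rightarrow> 'a \<Rightarrow> 'a \<Rightarrow> real" where
  "mh_accept p x y = (if p x = 0 then 1 else min 1 (p y / p x))"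

definition mh_kernel :: "'a measure \<Rightarrow> ('a \<Rightarrow> 'a \<Rightarrow> real) \<Rightarrow> ('a \<Rightarrow> real) \<Rightarrow> 'a \<Rightarrow> 'a set \<Rightarrow> real" where
  "mh_kernel lam q p x A =
     (\<integral>y. indicator A y * (q x y * mh_accept p x y) \<partial>lam)
     + indicator A x * (1 - (\<integral>y. q x y * mh_accept p x y \<partial>lam))"

definition wl_normalize :: "real ^ 'd::finite \<Rightarrow> real ^ 'd" where
  "wl_normalize v = (1 / (\<Sum>i\<in>UNIV. v $ i)) *\<^sub>R v"

fun wl_tilde :: "(real \<Rightarrow> real) \<Rightarrow> ('a \<Rightarrow> 'd::finite) \<Rightarrow> ('w \<Rightarrow> real ^ 'd)
    \<Rightarrow> (nat \<Rightarrow> 'w \<Rightarrow> real) \<Rightarrow> (nat \<Rightarrow> 'w \<Rightarrow> 'a) \<Rightarrow> nat \<Rightarrow> 'w \<Rightarrow> real ^ 'd" where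
  "wl_tilde rho I th0 gam X 0 w = th0 w"
| "wl_tilde rho I th0 gam X (Suc n) w =
     (let tt = wl_tilde rho I th0 gam X n w; th = wl_normalize tt in
      (\<chi> i. tt $ i * (1 + gam (Suc n) w * (rho (th $ i) / th $ i)
                         * (if I (X (Suc n) w) = i then 1 else 0))))"

definition wl_theta :: "(real \<Rightarrow> real) \<Rightarrow> ('a \<Rightarrow> 'd::finite) \<Rightarrow> ('w \<Rightarrow> real ^ 'd)
    \<Rightarrow> (nat \<Rightarrow> 'w \<Rightarrow> real) \<Rightarrow> (nat \<Rightarrow> 'w \<Rightarrow> 'a) \<Rightarrow> nat \<Rightarrow> 'w \<Rightarrow> real ^ 'd" where
  "wl_theta rho I th0 gam X n w = wl_normalize (wl_tilde rho I th0 gam X n w)"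

end

theory Submission
  imports Defs
begin

lemma filt_le:
  assumes mono: "\<forall>n. sets (F n) \<subseteq> sets (F (Suc n))" and "k \<le> n"
  shows "sets (F k) \<subseteq> sets (F n)"
  using lift_Suc_mono_le[of "\<lambda>n. sets (F n)", OF _ assms(2)] mono by blast

lemma meas_filt_mono:
  assumes sub: "\<forall>n. subalgebra M (F n)" and mono: "\<forall>n. sets (F n) \<subseteq> sets (F (Suc n))"
  and kn: "k \<le> n" and f: "f \<in> borel_measurable (F k)"
  shows "f \<in> borel_measurable (F n)"
proof -
  have s: "sets (F k) \<subseteq> sets (F n)" using filt_le[OF mono kn] .
  have sp: "space (F k) = space (F n)" using sub unfolding subalgebra_def by simp
  show ?thesis using f s sp unfolding measurable_def by auto
qed

lemma core_lemma:
  fixes M :: "'w measure" and F :: "nat \<Rightarrow> 'w measure" and Y :: "nat \<Rightarrow> 'w \<Rightarrow> real"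
  assumes prob: "prob_space M"
    and sub: "\<forall>n. subalgebra M (F n)"
    and mono: "\<forall>n. sets (F n) \<subseteq> sets (F (Suc n))"
    and Ymeas: "\<forall>n. Y n \<in> borel_measurable (F n)"
    and Ypos: "\<forall>n. \<forall>w\<in>space M. 0 \<le> Y n w"
    and growth: "\<forall>n. \<forall>w\<in>space M. Y (Suc n) w \<le> Cg * Y n w"
    and super: "\<forall>n\<ge>N0. \<forall>G\<in>sets (F n). (\<forall>w\<in>G. Kt \<le> Y n w) \<longrightarrow> (\<exists>B. \<forall>w\<in>G. Y n w \<le> B) \<longrightarrow>
        (\<integral>w. indicator G w * Y (Suc n) w \<partial>M) \<le> (\<integral>w. indicator G w * Y n w \<partial>M)"
  shows "AE w in M. \<exists>H. \<exists>\<^sub>F n in sequentially. Y n w \<le> H"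
proof -
  interpret prob_space M by (rule prob)
  have spF: "\<And>n. space (F n) = space M" using sub unfolding subalgebra_def by simp
  have setsF: "\<And>n. sets (F n) \<subseteq> sets M" using sub unfolding subalgebra_def by simp
  have YmF: "\<And>k n. k \<le> n \<Longrightarrow> Y k \<in> borel_measurable (F n)"
    using meas_filt_mono[OF sub mono] Ymeas by blast
  have YmM: "\<And>k. Y k \<in> borel_measurable M"
    using measurable_from_subalg sub Ymeas by blast
  define D where "D N j n = {w\<in>space M. Y N w \<le> real j \<and> (\<forall>k. N \<le> k \<and> k \<le> n \<longrightarrow> Kt \<le> Y k w)}" for N j n :: nat
  have Dsets: "D N j n \<in> sets (F n)" if "N \<le> n" for N j n
  proof -
    have eq: "D N j n = {w\<in>space (F n). Y N w \<le> real j} \<inter> space (F n) \<inter> (\<Inter>k\<in>{N..n}. {w\<in>space (F n). Kt \<le> Y k w})"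
      unfolding D_def spF by auto
    have "{w\<in>space (F n). Y N w \<le> real j} \<in> sets (F n)"
      using YmF[OF that] by measurable
    moreover have "(\<Inter>k\<in>{N..n}. {w\<in>space (F n). Kt \<le> Y k w}) \<in> sets (F n)"
    proof (rule sets.finite_INT)
      fix k assume "k \<in> {N..n}"
      then have [measurable]: "Y k \<in> borel_measurable (F n)" using YmF by auto
      show "{w\<in>space (F n). Kt \<le> Y k w} \<in> sets (F n)" by measurable
    qed (use that in auto)
    ultimately show ?thesis unfolding eq by auto
  qed
  have Dbound: "\<forall>w\<in>D N j n. Y n w \<le> real j * \<bar>Cg\<bar> ^ (n - N)" if "N \<le> n" for N j n
    using that
  proof (induction n rule: dec_induct)
    case base
    then show ?case unfolding D_def by auto
  next
    case (step n)
    show ?case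
    proof
      fix w assume w: "w \<in> D N j (Suc n)"
      then have wn: "w \<in> D N j n" unfolding D_def by auto
      have wM: "w \<in> space M" using w unfolding D_def by auto
      have "Y (Suc n) w \<le> Cg * Y n w" using growth wM by auto
      also have "\<dots> \<le> \<bar>Cg\<bar> * Y n w" using Ypos wM by (intro mult_right_mono) auto
      also have "\<dots> \<le> \<bar>Cg\<bar> * (real j * \<bar>Cg\<bar> ^ (n - N))"
        using step.IH wn by (intro mult_left_mono) auto
      also have "\<dots> = real j * \<bar>Cg\<bar> ^ (Suc n - N)" using step.hyps
        by (simp add: Suc_diff_le)
      finally show "Y (Suc n) w \<le> real j * \<bar>Cg\<bar> ^ (Suc n - N)" .
    qed
  qed
  have intD: "(\<integral>w. indicator (D N j n) w * Y n w \<partial>M) \<le> real j" if "N0 \<le> N" "N \<le> n" for N j n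
    using that(2)
  proof (induction n rule: dec_induct)
    case base
    have "(\<integral>w. indicator (D N j N) w * Y N w \<partial>M) \<le> (\<integral>w. real j \<partial>M)"
    proof (rule integral_mono)
      show "integrable M (\<lambda>w. indicator (D N j N) w * Y N w)"
        apply (rule integrable_const_bound[where B="real j"])
        using Ypos unfolding D_def apply (auto split: split_indicator)
        using YmM Dsets[of N N j] setsF by measurable
    qed (auto simp: D_def split: split_indicator)
    also have "\<dots> = real j" by (simp add: prob_space)
    finally show ?case .
  next
    case (step n)
    have Dm: "D N j n \<in> sets M" "D N j (Suc n) \<in> sets M"
      using Dsets[of N n j] Dsets[of N "Suc n" j] setsF step.hyps by auto
    have bnd: "\<forall>w\<in>D N j n. Y n w \<le> real j * \<bar>Cg\<bar> ^ (n - N)" using Dbound step.hyps by auto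
    have bnd2: "\<forall>w\<in>D N j n. Y (Suc n) w \<le> \<bar>Cg\<bar> * (real j * \<bar>Cg\<bar> ^ (n - N))"
    proof
      fix w assume w: "w \<in> D N j n"
      then have wM: "w \<in> space M" unfolding D_def by auto
      have "Y (Suc n) w \<le> Cg * Y n w" using growth wM by auto
      also have "\<dots> \<le> \<bar>Cg\<bar> * Y n w" using Ypos wM by (intro mult_right_mono) auto
      also have "\<dots> \<le> \<bar>Cg\<bar> * (real j * \<bar>Cg\<bar> ^ (n - N))" using bnd w by (intro mult_left_mono) auto
      finally show "Y (Suc n) w \<le> \<bar>Cg\<bar> * (real j * \<bar>Cg\<bar> ^ (n - N))" .
    qed
    have "(\<integral>w. indicator (D N j (Suc n)) w * Y (Suc n) w \<partial>M) \<le> (\<integral>w. indicator (D N j n) w * Y (Suc n) w \<partial>M)"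
    proof (rule integral_mono)
      show "integrable M (\<lambda>w. indicator (D N j (Suc n)) w * Y (Suc n) w)"
        apply (rule integrable_const_bound[where B="\<bar>Cg\<bar> * (real j * \<bar>Cg\<bar> ^ (n - N))"])
        using Ypos bnd2 unfolding D_def apply (auto split: split_indicator)
        using YmM Dm by measurable
      show "integrable M (\<lambda>w. indicator (D N j n) w * Y (Suc n) w)"
        apply (rule integrable_const_bound[where B="\<bar>Cg\<bar> * (real j * \<bar>Cg\<bar> ^ (n - N))"])
        using Ypos bnd2 Dm(1) sets.sets_into_space apply (auto split: split_indicator)
        using YmM Dm by measurable
      fix w assume "w \<in> space M"
      then show "indicator (D N j (Suc n)) w * Y (Suc n) w \<le> indicator (D N j n) w * Y (Suc n) w"
        using Ypos unfolding D_def by (auto split: split_indicator)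
    qed
    also have "\<dots> \<le> (\<integral>w. indicator (D N j n) w * Y n w \<partial>M)"
    proof -
      have "\<forall>w\<in>D N j n. Kt \<le> Y n w" unfolding D_def using step.hyps by auto
      moreover have "N0 \<le> n" using step.hyps that(1) by simp
      moreover have "D N j n \<in> sets (F n)" using Dsets[of N n j] step.hyps by simp
      ultimately show ?thesis
        using super[rule_format, of n "D N j n"] bnd by blast
    qed
    also have "\<dots> \<le> real j" using step.IH .
    finally show ?case .
  qed
  have markov: "measure M {w\<in>D N j n. H \<le> Y n w} \<le> real j / H" if "N0 \<le> N" "N \<le> n" "0 < H" for N j n and H :: real
  proof -
    let ?A = "{w\<in>D N j n. H \<le> Y n w}"
    have Dm: "D N j n \<in> sets M" using Dsets[of N n j] setsF that by auto
    have Am: "?A \<in> sets M"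
    proof -
      have "?A = D N j n \<inter> {w\<in>space M. H \<le> Y n w}" unfolding D_def by auto
      moreover have "{w\<in>space M. H \<le> Y n w} \<in> sets M" using YmM[of n] by measurable
      ultimately show ?thesis using Dm by auto
    qed
    have bnd: "\<forall>w\<in>D N j n. Y n w \<le> real j * \<bar>Cg\<bar> ^ (n - N)" using Dbound that by auto
    have "H * measure M ?A = (\<integral>w. H * indicator ?A w \<partial>M)"
      using Am by (simp add: integral_indicator sets.Int_space_eq2)
    also have "\<dots> \<le> (\<integral>w. indicator (D N j n) w * Y n w \<partial>M)"
    proof (rule integral_mono)
      show "integrable M (\<lambda>w. H * indicator ?A w)" using Am by (intro integrable_mult_right integrable_real_indicator) (auto simp: emeasure_eq_measure)
      show "integrable M (\<lambda>w. indicator (D N j n) w * Y n w)"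
        apply (rule integrable_const_bound[where B="real j * \<bar>Cg\<bar> ^ (n - N)"])
        using Ypos bnd Dm sets.sets_into_space apply (auto split: split_indicator)
        using YmM Dm by measurable
      fix w assume "w \<in> space M"
      then show "H * indicator ?A w \<le> indicator (D N j n) w * Y n w"
        using Ypos \<open>0 < H\<close> by (auto split: split_indicator)
    qed
    also have "\<dots> \<le> real j" using intD that by auto
    finally show ?thesis using \<open>0 < H\<close> by (simp add: field_simps mult.commute)
  qed
  define U where "U N j H m = {w\<in>space M. Y N w \<le> real j \<and> (\<forall>k. N \<le> k \<longrightarrow> Kt \<le> Y k w) \<and> (\<forall>n. m \<le> n \<longrightarrow> H \<le> Y n w)}"
    for N j :: nat and H :: real and m :: nat
  have Um: "U N j H m \<in> sets M" for N j H m
    unfolding U_def using YmM by measurable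
  have Ubnd: "measure M (U N j H m) \<le> real j / H" if "N0 \<le> N" "0 < H" for N j H m
  proof -
    have "U N j H m \<subseteq> {w\<in>D N j (max m N). H \<le> Y (max m N) w}"
      unfolding U_def D_def by auto
    moreover have "{w\<in>D N j (max m N). H \<le> Y (max m N) w} \<in> sets M"
    proof -
      have "{w\<in>D N j (max m N). H \<le> Y (max m N) w} = D N j (max m N) \<inter> {w\<in>space M. H \<le> Y (max m N) w}"
        unfolding D_def by auto
      moreover have "{w\<in>space M. H \<le> Y (max m N) w} \<in> sets M" using YmM by measurable
      moreover have "D N j (max m N) \<in> sets M" using Dsets[of N "max m N" j] setsF by auto
      ultimately show ?thesis by auto
    qed
    ultimately have "measure M (U N j H m) \<le> measure M {w\<in>D N j (max m N). H \<le> Y (max m N) w}"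
      by (intro finite_measure_mono) auto
    also have "\<dots> \<le> real j / H" using markov that by auto
    finally show ?thesis .
  qed
  have UUbnd: "measure M (\<Union>m. U N j H m) \<le> real j / H" if "N0 \<le> N" "0 < H" for N j H
  proof -
    have inc: "incseq (\<lambda>m. U N j H m)" unfolding incseq_def U_def by auto
    have "(\<lambda>m. measure M (U N j H m)) \<longlonglongrightarrow> measure M (\<Union>m. U N j H m)"
      using finite_Lim_measure_incseq[OF _ inc] Um by auto
    then show ?thesis
      by (rule LIMSEQ_le_const2) (use Ubnd that in auto)
  qed
  define W where "W N j = (\<Inter>H. \<Union>m. U N j (real (Suc H)) m)" for N j :: nat
  have Wm: "W N j \<in> sets M" for N j unfolding W_def using Um by auto
  have Wnull: "W N j \<in> null_sets M" if "N0 \<le> N" for N j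
  proof -
    have Wle: "measure M (W N j) \<le> real j / real (Suc H)" for H
    proof -
      have "measure M (W N j) \<le> measure M (\<Union>m. U N j (real (Suc H)) m)"
        unfolding W_def by (intro finite_measure_mono) (use Um in auto)
      also have "\<dots> \<le> real j / real (Suc H)" using UUbnd that by auto
      finally show ?thesis .
    qed
    have "measure M (W N j) = 0"
    proof (rule ccontr)
      assume "measure M (W N j) \<noteq> 0"
      then have pos: "measure M (W N j) > 0" by (simp add: zero_less_measure_iff)
      define H where "H = nat \<lceil>real j / measure M (W N j)\<rceil>"
      have "real j / measure M (W N j) \<le> real H" unfolding H_def by linarith
      then have "real j / measure M (W N j) < real (Suc H)" by simp
      then have "real j / real (Suc H) < measure M (W N j)" using pos
        by (simp add: field_simps)
      then show False using Wle[of H] by simp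
    qed
    then show ?thesis using Wm by (simp add: null_setsI emeasure_eq_measure)
  qed
  have "AE w in M. \<forall>N j. N0 \<le> N \<longrightarrow> w \<notin> W N j"
    unfolding AE_all_countable
  proof (intro allI)
    fix N j
    show "AE w in M. N0 \<le> N \<longrightarrow> w \<notin> W N j"
    proof (cases "N0 \<le> N")
      case True
      then show ?thesis using AE_not_in[OF Wnull[OF True]] by simp
    qed simp
  qed
  then show ?thesis
  proof (elim AE_mp, intro AE_I2 impI)
    fix w assume wM: "w \<in> space M" and nW: "\<forall>N j. N0 \<le> N \<longrightarrow> w \<notin> W N j"
    show "\<exists>H. \<exists>\<^sub>F n in sequentially. Y n w \<le> H"
    proof (rule ccontr)
      assume "\<not> ?thesis"
      then have ev: "\<forall>H. \<forall>\<^sub>F n in sequentially. H < Y n w"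
        by (simp add: not_frequently not_le)
      obtain N1 where N1: "\<forall>n\<ge>N1. Kt < Y n w" using ev[rule_format, of Kt]
        unfolding eventually_sequentially by auto
      define N where "N = max N0 N1"
      define j where "j = nat \<lceil>Y N w\<rceil>"
      have "w \<in> W N j" unfolding W_def
      proof (intro InterI, clarsimp)
        fix H :: nat
        obtain m where m: "\<forall>n\<ge>m. real (Suc H) < Y n w" using ev[rule_format, of "real (Suc H)"]
          unfolding eventually_sequentially by auto
        have "w \<in> U N j (real (Suc H)) m" unfolding U_def j_def using wM m N1
          by (auto simp: N_def less_imp_le real_nat_ceiling_ge)
        then show "\<exists>m. w \<in> U N j (1 + real H) m" by auto
      qed
      moreover have "N0 \<le> N" unfolding N_def by simp
      ultimately show False using nW by blast
    qed
  qed
qed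

lemma sum_gt_comp:
  fixes v :: "real ^ 'd::finite"
  assumes "CARD('d) \<ge> 2" "\<forall>i. 0 < v $ i"
  shows "v $ i < (\<Sum>j\<in>UNIV. v $ j)"
proof -
  have "card (UNIV - {i} :: 'd set) \<ge> 1" using assms(1) by (simp add: card_Diff_singleton)
  then obtain j where j: "j \<in> UNIV - {i}" by (metis card.empty ex_in_conv not_one_le_zero)
  have "(\<Sum>j\<in>UNIV. v $ j) = v $ i + (\<Sum>j\<in>UNIV - {i}. v $ j)" by (simp add: sum.remove)
  moreover have "v $ j \<le> (\<Sum>j\<in>UNIV - {i}. v $ j)"
    using j assms(2) by (intro member_le_sum) (auto intro: less_imp_le)
  ultimately show ?thesis using assms(2) by (metis add_less_cancel_left add_strict_increasing dual_order.strict_trans1 less_add_same_cancel1)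
qed

lemma key_ineq:
  fixes A p1 g L :: real
  assumes A: "0 < A" and p1: "0 < p1" "p1 \<le> 1/2" and g: "0 < g" "g \<le> p1 / (2 * A)" and L: "L = 4 * A / p1"
  shows "exp (A * g) * (1 - g * L / (1 + g * L) * p1) \<le> 1"
proof -
  define x where "x = A * g"
  have gL: "0 < g * L" using g A p1 L by simp
  have ccx: "x \<le> g * L / (1 + g * L) * p1"
  proof (cases "g * L \<le> 1")
    case True
    have "g * L / 2 \<le> g * L / (1 + g * L)" using gL True by (intro divide_left_mono) auto
    then have "g * L / 2 * p1 \<le> g * L / (1 + g * L) * p1" using p1 by (intro mult_right_mono) auto
    moreover have "g * L / 2 * p1 = 2 * x" unfolding x_def L using p1 by (simp add: field_simps)
    moreover have "0 \<le> x" unfolding x_def using A g by simp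
    ultimately show ?thesis by linarith
  next
    case False
    have "1 / 2 \<le> g * L / (1 + g * L)" using False by (simp add: field_simps)
    then have "1/2 * p1 \<le> g * L / (1 + g * L) * p1" using p1 by (intro mult_right_mono) auto
    moreover have "x \<le> p1 / 2" unfolding x_def using g A by (simp add: field_simps)
    ultimately show ?thesis by linarith
  qed
  have "exp x * (1 - g * L / (1 + g * L) * p1) \<le> exp x * (1 - x)"
    using ccx by (intro mult_left_mono) auto
  also have "\<dots> \<le> exp x * exp (- x)"
    using exp_ge_add_one_self[of "- x"] by (intro mult_left_mono) auto
  also have "\<dots> = 1" by (simp add: exp_minus)
  finally show ?thesis unfolding x_def .
qed

declare wl_tilde.simps(2)[simp del]

locale wls =
  fixes M :: "'w measure" and F :: "nat \<Rightarrow> 'w measure"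
    and lam :: "(real ^ 'D::finite) measure" and Xs :: "(real ^ 'D) set"
    and piX :: "real ^ 'D \<Rightarrow> real" and q :: "real ^ 'D \<Rightarrow> real ^ 'D \<Rightarrow> real"
    and I :: "real ^ 'D \<Rightarrow> 'd::finite" and rho :: "real \<Rightarrow> real"
    and th0 :: "'w \<Rightarrow> real ^ 'd" and X :: "nat \<Rightarrow> 'w \<Rightarrow> real ^ 'D"
    and gam :: "nat \<Rightarrow> 'w \<Rightarrow> real"
    assumes d2: "CARD('d) \<ge> 2"
    and Xs_meas: "Xs \<in> sets borel"
    and lam_sets: "sets lam = sets (restrict_space borel Xs)"
    and pi_meas: "piX \<in> borel_measurable lam"
    and pi_nonneg: "\<forall>x\<in>space lam. 0 \<le> piX x"
    and pi_prob: "(\<integral>\<^sup>+ x. ennreal (piX x) \<partial>lam) = 1"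
    and strata_meas: "\<forall>i. stratum lam I i \<in> sets lam"
    and A1_bdd: "\<exists>B. \<forall>x\<in>space lam. piX x \<le> B"
    and A1_pos: "\<forall>i. theta_star lam piX I i > 0"
    and q_meas: "(\<lambda>(x, y). q x y) \<in> borel_measurable (lam \<Otimes>\<^sub>M lam)"
    and q_sym: "\<forall>x\<in>space lam. \<forall>y\<in>space lam. q x y = q y x"
    and q_dens: "\<forall>x\<in>space lam. (\<integral>\<^sup>+ y. ennreal (q x y) \<partial>lam) = 1"
    and q_inf: "\<exists>c>0. \<forall>x\<in>space lam. \<forall>y\<in>space lam. c \<le> q x y"
    and rho_meas: "rho \<in> borel_measurable (restrict_space borel {0<..<1})"
    and rho_pos: "\<forall>t\<in>{0<..<1}. 0 < rho t"
    and R2: "\<exists>B. \<forall>t\<in>{0<..<1}. rho t \<le> B"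
    and R3_mono: "mono_on {0<..<1} rho"
    and R3_ratio: "\<exists>R>1. \<exists>c>0. \<forall>t\<in>{0<..<1/R}. c \<le> rho t / rho (R * t)"
    and R4_anti: "antimono_on {0<..<1} (\<lambda>t. rho t / t)"
    and R4_lim: "filterlim (\<lambda>t. rho t / t) at_top (at_right 0)"
    and prob: "prob_space M"
    and filt_sub: "\<forall>n. subalgebra M (F n)"
    and filt_mono: "\<forall>n. sets (F n) \<subseteq> sets (F (Suc n))"
    and th0_meas: "th0 \<in> borel_measurable (F 0)"
    and th0_pos: "\<forall>w\<in>space M. \<forall>i. 0 < th0 w $ i"
    and X_meas: "\<forall>n. X n \<in> measurable (F n) lam"
    and gam_meas: "\<forall>n. gam (Suc n) \<in> borel_measurable (F n)"
    and gam_pos: "\<forall>n\<ge>1. \<forall>w\<in>space M. 0 < gam n w"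
    and cond_law: "\<forall>n. \<forall>A\<in>sets lam. AE w in M.
        real_cond_exp M (F n) (\<lambda>w. indicator A (X (Suc n) w)) w
        = mh_kernel lam q (bias_density lam piX I rho (wl_theta rho I th0 gam X n w)) (X n w) A"
    and gam_noninc: "\<forall>n\<ge>1. \<forall>w\<in>space M. gam (Suc n) w \<le> gam n w"
    and gam_bound: "\<exists>g::nat \<Rightarrow> real. g \<longlonglongrightarrow> 0 \<and> (\<forall>n\<ge>1. \<forall>w\<in>space M. gam n w \<le> g n)"
    and gam_ratio: "\<forall>w\<in>space M. \<exists>C. \<forall>n\<ge>1. gam n w / gam (n + CARD('d) - 1) w \<le> C"
begin

abbreviation tt where "tt n w \<equiv> wl_tilde rho I th0 gam X n w"
abbreviation th where "th n w \<equiv> wl_theta rho I th0 gam X n w"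
abbreviation S where "S n w \<equiv> (\<Sum>i\<in>UNIV. tt n w $ i)"
abbreviation Y where "Y n w \<equiv> S n w ^ CARD('d) / (\<Prod>i\<in>UNIV. tt n w $ i)"

lemma th_comp: "th n w $ i = tt n w $ i / S n w"
  by (simp add: wl_theta_def wl_normalize_def)

lemma tt_Suc: "tt (Suc n) w $ i = tt n w $ i * (1 + gam (Suc n) w * (rho (th n w $ i) / th n w $ i)
   * (if I (X (Suc n) w) = i then 1 else 0))"
  by (simp add: Let_def wl_theta_def wl_tilde.simps(2))

lemma tt_pos: "w \<in> space M \<Longrightarrow> 0 < tt n w $ i"
proof (induction n arbitrary: i)
  case 0
  then show ?case using th0_pos by simp
next
  case (Suc n)
  have p: "\<forall>j. 0 < tt n w $ j" using Suc by auto
  have t0: "0 < th n w $ i" using p[rule_format, of i] sum_gt_comp[OF d2 p, of i] unfolding th_comp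
    by (simp add: divide_pos_pos)
  have t1: "th n w $ i < 1" using p[rule_format, of i] sum_gt_comp[OF d2 p, of i] unfolding th_comp
    by simp
  have r: "0 < rho (th n w $ i)" using rho_pos t0 t1 by auto
  have g: "0 < gam (Suc n) w" using gam_pos Suc.prems by auto
  have "0 \<le> gam (Suc n) w * (rho (th n w $ i) / th n w $ i) * (if I (X (Suc n) w) = i then 1 else 0)"
    using r g t0 by simp
  then show ?case unfolding tt_Suc using p by (simp add: add_pos_nonneg)
qed

lemma th_bounds: "w \<in> space M \<Longrightarrow> 0 < th n w $ i \<and> th n w $ i < 1"
proof -
  assume w: "w \<in> space M"
  have p: "\<forall>j. 0 < tt n w $ j" using tt_pos w by auto
  show ?thesis using p[rule_format, of i] sum_gt_comp[OF d2 p, of i] unfolding th_comp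
    by (simp add: divide_pos_pos)
qed

lemma S_pos: "w \<in> space M \<Longrightarrow> 0 < S n w"
  using tt_pos by (simp add: sum_pos)

lemma th_sum: "w \<in> space M \<Longrightarrow> (\<Sum>i\<in>UNIV. th n w $ i) = 1"
  using S_pos[of w n] unfolding th_comp by (simp add: sum_divide_distrib[symmetric])

lemma th_Theta: "w \<in> space M \<Longrightarrow> th n w \<in> wl_Theta"
  unfolding wl_Theta_def using th_bounds th_sum by auto

lemma Y_Suc:
  fixes n :: nat and w :: 'w
  assumes w: "w \<in> space M"
  defines "k \<equiv> I (X (Suc n) w)"
  shows "Y (Suc n) w = Y n w * (1 + gam (Suc n) w * rho (th n w $ k)) ^ CARD('d)
            / (1 + gam (Suc n) w * (rho (th n w $ k) / th n w $ k))"
proof -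
  define g where "g = gam (Suc n) w"
  define r where "r = rho (th n w $ k)"
  define f where "f = 1 + g * (r / th n w $ k)"
  have ttS: "tt (Suc n) w $ i = tt n w $ i * (if i = k then f else 1)" for i
    unfolding tt_Suc f_def g_def r_def k_def by auto
  have prod: "(\<Prod>i\<in>UNIV. tt (Suc n) w $ i) = (\<Prod>i\<in>UNIV. tt n w $ i) * f"
    unfolding ttS prod.distrib by simp
  have "S (Suc n) w = (\<Sum>i\<in>UNIV. tt n w $ i + (if i = k then tt n w $ i * (f - 1) else 0))"
    unfolding ttS by (intro sum.cong) (auto simp: algebra_simps)
  also have "\<dots> = S n w + tt n w $ k * (f - 1)" by (simp add: sum.distrib)
  also have "tt n w $ k * (f - 1) = S n w * (g * r)"
  proof -
    have "tt n w $ k = th n w $ k * S n w" using S_pos[OF w, of n] unfolding th_comp by simp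
    moreover have "th n w $ k > 0" using th_bounds w by auto
    ultimately show ?thesis unfolding f_def by (simp add: field_simps)
  qed
  finally have sum: "S (Suc n) w = S n w * (1 + g * r)" by (simp add: algebra_simps)
  show ?thesis unfolding sum prod
    by (simp add: power_mult_distrib g_def r_def f_def)
qed

lemma Y_pos: "w \<in> space M \<Longrightarrow> 0 < Y n w"
  using S_pos tt_pos by (simp add: prod_pos)

lemma Y_prod: "w \<in> space M \<Longrightarrow> Y n w = (\<Prod>i\<in>UNIV. 1 / th n w $ i)"
proof -
  assume w: "w \<in> space M"
  have "(\<Prod>i\<in>UNIV. 1 / th n w $ i) = (\<Prod>i\<in>UNIV. S n w / tt n w $ i)"
    unfolding th_comp by simp
  also have "\<dots> = (\<Prod>i\<in>(UNIV::'d set). S n w) / (\<Prod>i\<in>UNIV. tt n w $ i)" by (simp add: prod_dividef)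
  finally show ?thesis by simp
qed

lemma Y_ge: "w \<in> space M \<Longrightarrow> 1 / th n w $ j \<le> Y n w"
proof -
  assume w: "w \<in> space M"
  have ge1: "1 \<le> 1 / th n w $ i" for i using th_bounds[OF w, of n i] by simp
  have e: "(\<Prod>i\<in>UNIV. 1 / th n w $ i) = 1 / th n w $ j * (\<Prod>i\<in>UNIV - {j}. 1 / th n w $ i)"
    by (simp add: prod.remove)
  moreover have "1 \<le> (\<Prod>i\<in>UNIV - {j}. 1 / th n w $ i)" using ge1 by (intro prod_ge_1) auto
  moreover have "0 \<le> 1 / th n w $ j" using ge1[of j] by linarith
  ultimately have "1 / th n w $ j * 1 \<le> 1 / th n w $ j * (\<Prod>i\<in>UNIV - {j}. 1 / th n w $ i)"
    by (intro mult_left_mono) auto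
  then show ?thesis using Y_prod[OF w] e by (simp only: mult_1_right)
qed

lemma Y_le_min: "w \<in> space M \<Longrightarrow> \<forall>i. th n w $ j \<le> th n w $ i \<Longrightarrow> Y n w \<le> (1 / th n w $ j) ^ CARD('d)"
proof -
  assume w: "w \<in> space M" and mn: "\<forall>i. th n w $ j \<le> th n w $ i"
  have "(\<Prod>i\<in>UNIV. 1 / th n w $ i) \<le> (\<Prod>i\<in>(UNIV::'d set). 1 / th n w $ j)"
  proof (rule prod_mono)
    fix i :: 'd
    have "0 < th n w $ j" "0 < th n w $ i" using th_bounds w by auto
    then show "0 \<le> 1 / th n w $ i \<and> 1 / th n w $ i \<le> 1 / th n w $ j"
      using mn by (simp add: frac_le)
  qed
  then show ?thesis using Y_prod[OF w] by simp
qed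


lemma spF: "space (F n) = space M"
  using filt_sub unfolding subalgebra_def by simp

lemma Xspace: "w \<in> space M \<Longrightarrow> X n w \<in> space lam"
  using measurable_space[OF X_meas[rule_format, of n]] spF by auto

lemma vec_nth_meas: "(\<lambda>v::real^'e::finite. v $ i) \<in> borel_measurable borel"
  using bounded_linear_vec_nth[of i] by (intro borel_measurable_continuous_onI linear_continuous_on)

lemma tt_meas: "(\<lambda>w. tt n w $ i) \<in> borel_measurable (F n)"
proof (induction n arbitrary: i)
  case 0
  show ?case using measurable_compose[OF th0_meas vec_nth_meas] by simp
next
  case (Suc n)
  have IH: "(\<lambda>w. tt n w $ j) \<in> borel_measurable (F (Suc n))" for j
    using meas_filt_mono[OF filt_sub filt_mono, of n "Suc n"] Suc by auto
  have Sm: "(\<lambda>w. S n w) \<in> borel_measurable (F (Suc n))"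
    using IH by (intro borel_measurable_sum) auto
  have thmeas: "(\<lambda>w. tt n w $ i / S n w) \<in> borel_measurable (F (Suc n))"
    using IH Sm by (intro borel_measurable_divide) auto
  have thr: "(\<lambda>w. tt n w $ i / S n w) \<in> measurable (F (Suc n)) (restrict_space borel {0<..<1})"
  proof (rule measurable_restrict_space2)
    show "(\<lambda>w. tt n w $ i / S n w) \<in> space (F (Suc n)) \<rightarrow> {0<..<1}"
      using th_bounds[of _ n i] unfolding th_comp spF by auto
  qed (rule thmeas)
  have rhom: "(\<lambda>w. rho (tt n w $ i / S n w)) \<in> borel_measurable (F (Suc n))"
    using measurable_compose[OF thr rho_meas] .
  have gm: "gam (Suc n) \<in> borel_measurable (F (Suc n))"
    using meas_filt_mono[OF filt_sub filt_mono, of n "Suc n"] gam_meas by auto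
  have Am: "X (Suc n) -` stratum lam I i \<inter> space (F (Suc n)) \<in> sets (F (Suc n))"
    using measurable_sets[OF X_meas[rule_format, of "Suc n"] strata_meas[rule_format, of i]] .
  define gf where "gf = (\<lambda>w. tt n w $ i * (1 + gam (Suc n) w * (rho (tt n w $ i / S n w) / (tt n w $ i / S n w))
      * indicator (X (Suc n) -` stratum lam I i \<inter> space (F (Suc n))) w))"
  have gfm: "gf \<in> borel_measurable (F (Suc n))"
    unfolding gf_def using IH Sm thmeas rhom gm Am by measurable
  have eq: "tt (Suc n) w $ i = gf w" if w: "w \<in> space (F (Suc n))" for w
  proof -
    have "X (Suc n) w \<in> space lam" using Xspace spF w by auto
    then show ?thesis
      unfolding tt_Suc th_comp gf_def using w by (simp add: stratum_def indicator_def)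
  qed
  show ?case using measurable_cong[of "F (Suc n)" "\<lambda>w. tt (Suc n) w $ i" gf borel] eq gfm by simp
qed

lemma S_meas: "(\<lambda>w. S n w) \<in> borel_measurable (F n)"
  using tt_meas by (intro borel_measurable_sum) auto

lemma th_meas: "(\<lambda>w. th n w $ i) \<in> borel_measurable (F n)"
  unfolding th_comp using tt_meas S_meas by (intro borel_measurable_divide) auto

lemma Y_meas: "Y n \<in> borel_measurable (F n)"
  using tt_meas S_meas by (intro borel_measurable_divide borel_measurable_power borel_measurable_prod) auto


lemma rhoI_meas: "(\<lambda>y. rho (v $ I y)) \<in> borel_measurable lam"
proof -
  have "(\<lambda>y. \<Sum>i\<in>UNIV. indicator (stratum lam I i) y * rho (v $ i)) \<in> borel_measurable lam"
    using strata_meas by (intro borel_measurable_sum) auto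
  moreover have "\<forall>y\<in>space lam. (\<Sum>i\<in>UNIV. indicator (stratum lam I i) y * rho (v $ i)) = rho (v $ I y)"
  proof
    fix y assume y: "y \<in> space lam"
    have "(\<Sum>i\<in>UNIV. indicator (stratum lam I i) y * rho (v $ i)) = (\<Sum>i\<in>UNIV. if I y = i then rho (v $ i) else 0)"
      using y by (intro sum.cong) (auto simp: stratum_def)
    also have "\<dots> = rho (v $ I y)" by simp
    finally show "(\<Sum>i\<in>UNIV. indicator (stratum lam I i) y * rho (v $ i)) = rho (v $ I y)" .
  qed
  ultimately show ?thesis
    using measurable_cong[of lam "\<lambda>y. rho (v $ I y)" "\<lambda>y. \<Sum>i\<in>UNIV. indicator (stratum lam I i) y * rho (v $ i)" borel]
    by simp
qed

lemma Z_pos: "v \<in> wl_Theta \<Longrightarrow> 0 < bias_Z lam piX I rho v"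
proof -
  assume v: "v \<in> wl_Theta"
  have "0 < theta_star lam piX I i / rho (v $ i)" for i
    using A1_pos rho_pos v unfolding wl_Theta_def by (auto intro!: divide_pos_pos)
  then show ?thesis unfolding bias_Z_def by (intro sum_pos) auto
qed

lemma pi_int: "integrable lam piX"
  using pi_meas pi_nonneg pi_prob by (intro integrableI_nn_integral_finite[where x=1]) (auto intro: AE_I2)

lemma visit_prob:
  assumes v: "v \<in> wl_Theta" and x: "x \<in> space lam" and mn: "\<forall>j. v $ k \<le> v $ j"
    and cq: "0 < cq" "\<forall>x\<in>space lam. \<forall>y\<in>space lam. cq \<le> q x y"
    and Bp: "1 \<le> Bp" "\<forall>x\<in>space lam. piX x \<le> Bp"
  shows "cq * theta_star lam piX I k / Bp \<le> mh_kernel lam q (bias_density lam piX I rho v) x (stratum lam I k)"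
proof -
  define p where "p = bias_density lam piX I rho v"
  define A where "A = stratum lam I k"
  define Z where "Z = bias_Z lam piX I rho v"
  have Zp: "0 < Z" unfolding Z_def using Z_pos v by auto
  have vb: "0 < v $ i \<and> v $ i < 1" for i using v unfolding wl_Theta_def by auto
  have rp: "0 < rho (v $ i)" for i using rho_pos vb by auto
  have p_eq: "p y = piX y / rho (v $ I y) / Z" for y unfolding p_def Z_def bias_density_def by simp
  have Am: "A \<in> sets lam" unfolding A_def using strata_meas by auto
  have qm: "(\<lambda>y. q x y) \<in> borel_measurable lam"
    using measurable_Pair2[OF q_meas x] by simp
  have qnn: "\<forall>y\<in>space lam. 0 \<le> q x y" using cq x by (auto intro: order.trans[OF less_imp_le])
  have qint: "integrable lam (\<lambda>y. q x y)"
    using qm qnn q_dens x by (intro integrableI_nn_integral_finite[where x=1]) (auto intro: AE_I2)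
  have qI: "(\<integral>y. q x y \<partial>lam) = 1"
    using integral_eq_nn_integral[OF qm] qnn q_dens x by (auto intro: AE_I2)
  have pm: "p \<in> borel_measurable lam"
    unfolding p_eq[abs_def] using pi_meas rhoI_meas[of v] by measurable
  have pnn: "\<forall>y\<in>space lam. 0 \<le> p y" using pi_nonneg rp Zp unfolding p_eq by (auto intro!: divide_nonneg_pos mult_pos_pos)
  define acc where "acc y = mh_accept p x y" for y
  have accm: "acc \<in> borel_measurable lam"
  proof (cases "p x = 0")
    case True
    then show ?thesis unfolding acc_def mh_accept_def by simp
  next
    case False
    then show ?thesis unfolding acc_def mh_accept_def using pm by simp
  qed
  have acc01: "0 \<le> acc y \<and> acc y \<le> 1" if y: "y \<in> space lam" for y
  proof (cases "p x = 0")
    case True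
    then show ?thesis unfolding acc_def mh_accept_def by simp
  next
    case False
    moreover have "0 \<le> p x" using pnn x by blast
    ultimately have "0 < p x" by linarith
    then show ?thesis unfolding acc_def mh_accept_def using False pnn y by auto
  qed
  have acc_lb: "piX y / Bp \<le> acc y" if y: "y \<in> A" for y
  proof -
    have ys: "y \<in> space lam" and Iy: "I y = k" using y unfolding A_def stratum_def by auto
    have py: "piX y / Bp \<le> 1" using Bp ys by auto
    show ?thesis
    proof (cases "p x = 0")
      case True
      then show ?thesis unfolding acc_def mh_accept_def using py by simp
    next
      case False
      moreover have "0 \<le> p x" using pnn x by blast
      ultimately have pxp: "0 < p x" by linarith
      then have pix: "0 < piX x" unfolding p_eq using rp Zp pi_nonneg x
        by (metis divide_eq_0_iff order_le_less)
      have rle: "rho (v $ k) \<le> rho (v $ I x)"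
        using R3_mono mn vb unfolding mono_on_def by auto
      have "p y / p x = piX y * rho (v $ I x) / (rho (v $ k) * piX x)"
      proof -
        have a: "rho (v $ k) \<noteq> 0" "rho (v $ I x) \<noteq> 0" "Z \<noteq> 0" "piX x \<noteq> 0"
          using rp[of k] rp[of "I x"] Zp pix by auto
        show ?thesis unfolding p_eq Iy using a by (simp add: divide_simps)
      qed
      also have "\<dots> = (piX y / piX x) * (rho (v $ I x) / rho (v $ k))" by (simp add: field_simps)
      also have "\<dots> \<ge> (piX y / piX x) * 1"
        using rle rp[of k] pi_nonneg ys pix by (intro mult_left_mono) auto
      finally have "p y / p x \<ge> piX y / piX x" by simp
      moreover have "piX y / piX x \<ge> piX y / Bp"
        using pix Bp x pi_nonneg ys by (intro divide_left_mono) auto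
      ultimately show ?thesis unfolding acc_def mh_accept_def using False py by auto
    qed
  qed
  have nb: "norm (indicator A y * (q x y * acc y)) \<le> norm (q x y)" "norm (q x y * acc y) \<le> norm (q x y)"
    if y: "y \<in> space lam" for y
  proof -
    have a: "0 \<le> acc y" "acc y \<le> 1" using acc01[OF y] by auto
    have qq: "0 \<le> q x y" using qnn y by auto
    have "q x y * acc y \<le> q x y" using mult_left_mono[OF a(2) qq] by simp
    moreover have "0 \<le> q x y * acc y" using a qq by simp
    ultimately show "norm (indicator A y * (q x y * acc y)) \<le> norm (q x y)" "norm (q x y * acc y) \<le> norm (q x y)"
      using qq by (auto split: split_indicator)
  qed
  have i1: "integrable lam (\<lambda>y. indicator A y * (q x y * acc y))"
  proof (rule Bochner_Integration.integrable_bound[OF qint])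
    show "(\<lambda>y. indicator A y * (q x y * acc y)) \<in> borel_measurable lam"
      using borel_measurable_indicator[OF Am] qm accm by (intro borel_measurable_times) auto
  qed (use nb in \<open>auto intro!: AE_I2\<close>)
  have i2: "integrable lam (\<lambda>y. q x y * acc y)"
  proof (rule Bochner_Integration.integrable_bound[OF qint])
    show "(\<lambda>y. q x y * acc y) \<in> borel_measurable lam"
      using qm accm by (intro borel_measurable_times) auto
  qed (use nb in \<open>auto intro!: AE_I2\<close>)
  have "(\<integral>y. q x y * acc y \<partial>lam) \<le> (\<integral>y. q x y \<partial>lam)"
  proof (rule integral_mono[OF i2 qint])
    fix y assume y: "y \<in> space lam"
    have a: "acc y \<le> 1" using acc01[OF y] by auto
    have qq: "0 \<le> q x y" using qnn y by auto
    show "q x y * acc y \<le> q x y" using mult_left_mono[OF a qq] by simp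
  qed
  then have second: "0 \<le> indicator A x * (1 - (\<integral>y. q x y * acc y \<partial>lam))" using qI by simp
  have "cq * theta_star lam piX I k / Bp = (\<integral>y. indicator A y * (cq * piX y / Bp) \<partial>lam)"
  proof -
    have "(\<integral>y. indicator A y * (cq * piX y / Bp) \<partial>lam) = (\<integral>y. (cq / Bp) * (indicator A y * piX y) \<partial>lam)"
      by (intro Bochner_Integration.integral_cong) auto
    also have "\<dots> = (cq / Bp) * (\<integral>y. indicator A y * piX y \<partial>lam)"
      by (rule integral_mult_right_zero)
    finally have e: "(\<integral>y. indicator A y * (cq * piX y / Bp) \<partial>lam) = (cq / Bp) * (\<integral>y. indicator A y * piX y \<partial>lam)" .
    have t: "theta_star lam piX I k = (\<integral>y. indicator A y * piX y \<partial>lam)" unfolding theta_star_def A_def ..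
    define T where "T = (\<integral>y. indicator A y * piX y \<partial>lam)"
    show ?thesis unfolding e t T_def[symmetric] by simp
  qed
  also have "\<dots> \<le> (\<integral>y. indicator A y * (q x y * acc y) \<partial>lam)"
  proof (rule integral_mono[OF _ i1])
    show "integrable lam (\<lambda>y. indicator A y * (cq * piX y / Bp))"
    proof -
      have ii: "integrable lam (\<lambda>y. indicator A y *\<^sub>R ((cq/Bp) * piX y))"
        using Am pi_int by (intro integrable_mult_indicator integrable_mult_right) auto
      have eq: "(\<lambda>y. indicator A y * (cq * piX y / Bp)) = (\<lambda>y. indicator A y *\<^sub>R ((cq/Bp) * piX y))"
        by (auto simp: fun_eq_iff)
      show ?thesis using ii unfolding eq .
    qed
    fix y assume y: "y \<in> space lam"
    show "indicator A y * (cq * piX y / Bp) \<le> indicator A y * (q x y * acc y)"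
    proof (cases "y \<in> A")
      case True
      have "cq * (piX y / Bp) \<le> q x y * acc y"
        using cq x y acc_lb[OF True] pi_nonneg Bp qnn by (intro mult_mono) auto
      then show ?thesis using True by simp
    qed simp
  qed
  also have "\<dots> \<le> mh_kernel lam q p x A"
    unfolding mh_kernel_def acc_def[symmetric] using second by simp
  finally show ?thesis unfolding p_def A_def .
qed


lemma Xmeas_M: "X n \<in> measurable M lam"
  using measurable_from_subalg[OF filt_sub[rule_format, of n] X_meas[rule_format, of n]] .

lemma Fmeas_M: "f \<in> borel_measurable (F n) \<Longrightarrow> f \<in> borel_measurable M"
  using measurable_from_subalg[OF filt_sub[rule_format, of n]] by blast

lemma FsetsM: "G \<in> sets (F n) \<Longrightarrow> G \<in> sets M"
  using filt_sub unfolding subalgebra_def by auto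

lemma intb: fixes f :: "'w \<Rightarrow> real" shows "f \<in> borel_measurable M \<Longrightarrow> (\<forall>w\<in>space M. \<bar>f w\<bar> \<le> C) \<Longrightarrow> integrable M f"
proof -
  assume f: "f \<in> borel_measurable M" and b: "\<forall>w\<in>space M. \<bar>f w\<bar> \<le> C"
  interpret prob_space M by (rule prob)
  show ?thesis by (rule integrable_const_bound[where B=C]) (use f b in \<open>auto intro!: AE_I2\<close>)
qed

lemma ex_minimizer: "\<exists>k. \<forall>j. (v::real^'d) $ k \<le> v $ j"
proof -
  have "Min (range (\<lambda>j. v $ j)) \<in> range (\<lambda>j. v $ j)" by (intro Min_in) auto
  then obtain k where k: "v $ k = Min (range (\<lambda>j. v $ j))" by (metis rangeE)
  show ?thesis using k by (intro exI[of _ k]) auto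
qed

end


lemma K_props:
  assumes d2: "CARD('d::finite) \<ge> 2" and dp: "0 < \<delta>"
  shows "compact {v::real^'d. (\<forall>j. \<delta> \<le> v $ j) \<and> (\<Sum>j\<in>UNIV. v $ j) = 1}"
    and "{v::real^'d. (\<forall>j. \<delta> \<le> v $ j) \<and> (\<Sum>j\<in>UNIV. v $ j) = 1} \<subseteq> wl_Theta"
proof -
  let ?K = "{v::real^'d. (\<forall>j. \<delta> \<le> v $ j) \<and> (\<Sum>j\<in>UNIV. v $ j) = 1}"
  have Keq: "?K = (\<Inter>j. {v. \<delta> \<le> v $ j}) \<inter> {v. (\<Sum>j\<in>UNIV. v $ j) = 1}" by auto
  have c1: "closed {v::real^'d. \<delta> \<le> v $ j}" for j
    by (intro closed_Collect_le continuous_intros)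
  have c2: "closed {v::real^'d. (\<Sum>j\<in>UNIV. v $ j) = 1}"
    by (intro closed_Collect_eq continuous_intros)
  have c3: "closed (\<Inter>j. {v::real^'d. \<delta> \<le> v $ j})" using c1 by (intro closed_INT) auto
  have cl: "closed ?K" unfolding Keq by (rule closed_Int[OF c3 c2])
  have bd: "bounded ?K"
    unfolding bounded_iff
  proof (intro exI[of _ 1] ballI)
    fix v assume v: "v \<in> ?K"
    have "norm v \<le> (\<Sum>i\<in>UNIV. \<bar>v $ i\<bar>)" by (rule norm_le_l1_cart)
    also have "\<dots> = (\<Sum>i\<in>UNIV. v $ i)" using v dp by (intro sum.cong) (auto intro: abs_of_nonneg order.trans[OF less_imp_le])
    finally show "norm v \<le> 1" using v by simp
  qed
  show "compact ?K" using cl bd by (simp add: compact_eq_bounded_closed)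
  show "?K \<subseteq> wl_Theta"
  proof
    fix v assume v: "v \<in> ?K"
    have pos: "\<forall>i. 0 < v $ i" using v dp by (auto intro: order.strict_trans2)
    have "v $ i < 1" for i using sum_gt_comp[OF d2 pos, of i] v by simp
    then show "v \<in> wl_Theta" unfolding wl_Theta_def using pos v by auto
  qed
qed

context wls begin

lemma super_step:
  assumes cq: "0 < cq" "\<forall>x\<in>space lam. \<forall>y\<in>space lam. cq \<le> q x y"
    and Bp: "1 \<le> Bp" "\<forall>x\<in>space lam. piX x \<le> Bp"
    and p1: "0 < p1" "p1 \<le> 1/2" "\<forall>k. p1 \<le> cq * theta_star lam piX I k / Bp"
    and Rb: "0 < Rb" "\<forall>t\<in>{0<..<1}. rho t \<le> Rb"
    and AA: "AA = real CARD('d) * Rb"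
    and L: "L = 4 * AA / p1"
    and t0: "0 < t0" "\<forall>t. 0 < t \<longrightarrow> t \<le> t0 \<longrightarrow> t < 1 \<longrightarrow> L \<le> rho t / t"
    and Kt: "Kt = (1 / t0) ^ CARD('d)"
    and gsmall: "\<forall>w\<in>space M. gam (Suc n) w \<le> p1 / (2 * AA)"
    and G: "G \<in> sets (F n)" "\<forall>w\<in>G. Kt \<le> Y n w" "\<forall>w\<in>G. Y n w \<le> B"
  shows "(\<integral>w. indicator G w * Y (Suc n) w \<partial>M) \<le> (\<integral>w. indicator G w * Y n w \<partial>M)"
proof -
  interpret prob_space M by (rule prob)
  interpret fms: finite_measure_subalgebra M "F n"
    by unfold_locales (use filt_sub in auto)
  have AAp: "0 < AA" unfolding AA using Rb by simp
  have GM: "G \<in> sets M" using FsetsM[OF G(1)] .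
  have Gsp: "G \<subseteq> space M" using sets.sets_into_space[OF GM] .
  define gm where "gm w = gam (Suc n) w" for w
  have gpos: "0 < gm w" if "w \<in> space M" for w using gam_pos that unfolding gm_def by auto
  have gbd: "gm w \<le> p1 / (2 * AA)" if "w \<in> space M" for w using gsmall that unfolding gm_def by auto
  define ea where "ea w = exp (AA * gm w)" for w
  define cc where "cc w = gm w * L / (1 + gm w * L)" for w
  define E where "E k = {w\<in>space M. \<forall>j. th n w $ k \<le> th n w $ j}" for k
  define V where "V k w = (indicator (stratum lam I k) (X (Suc n) w) :: real)" for k w
  define h where "h k w = indicator G w * Y n w * ea w * cc w * indicator (E k) w" for k w
  have Lp: "0 < L" unfolding L using AAp p1 by simp
  define B' where "B' = max B 0"
  have YmF: "Y n \<in> borel_measurable (F n)" by (rule Y_meas)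
  have YM: "Y n \<in> borel_measurable M" "Y (Suc n) \<in> borel_measurable M"
    using Fmeas_M[OF Y_meas] by auto
  have gmF: "gm \<in> borel_measurable (F n)" unfolding gm_def using gam_meas by auto
  have eaF: "ea \<in> borel_measurable (F n)" unfolding ea_def[abs_def] using gmF by measurable
  have ccF: "cc \<in> borel_measurable (F n)" unfolding cc_def[abs_def] using gmF by measurable
  have EF: "E k \<in> sets (F n)" for k
  proof -
    have "E k = space (F n) \<inter> (\<Inter>j. {w\<in>space (F n). th n w $ k \<le> th n w $ j})"
      unfolding E_def spF by auto
    moreover have "{w\<in>space (F n). th n w $ k \<le> th n w $ j} \<in> sets (F n)" for j
      using th_meas[of n k] th_meas[of n j] by measurable
    ultimately show ?thesis by auto
  qed
  have VM: "V k \<in> borel_measurable M" for k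
    unfolding V_def[abs_def] using Xmeas_M[of "Suc n"] strata_meas by measurable
  have hF: "h k \<in> borel_measurable (F n)" for k
    unfolding h_def[abs_def] using G(1) YmF eaF ccF EF[of k] by measurable
  have hM: "h k \<in> borel_measurable M" for k using Fmeas_M[OF hF] .
  have eaM: "ea \<in> borel_measurable M" "cc \<in> borel_measurable M" using Fmeas_M eaF ccF by auto
  have GYb: "0 \<le> indicator G w * Y n w \<and> indicator G w * Y n w \<le> B'" if w: "w \<in> space M" for w
    using Y_pos[OF w, of n] G(3) unfolding B'_def by (auto split: split_indicator)
  have eab: "0 < ea w \<and> ea w \<le> exp (p1 / 2)" if w: "w \<in> space M" for w
  proof -
    have "AA * gm w \<le> AA * (p1 / (2 * AA))" using gbd[OF w] AAp by (intro mult_left_mono) auto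
    also have "\<dots> = p1 / 2" using AAp by simp
    finally show ?thesis unfolding ea_def by simp
  qed
  have ccb: "0 \<le> cc w \<and> cc w \<le> 1" if w: "w \<in> space M" for w
  proof -
    have "0 < gm w * L" using gpos[OF w] Lp by simp
    then show ?thesis unfolding cc_def by simp
  qed
  have hb: "0 \<le> h k w \<and> h k w \<le> B' * exp (p1 / 2)" if w: "w \<in> space M" for k w
  proof -
    have a: "0 \<le> indicator G w * Y n w * ea w"
      using mult_nonneg_nonneg[of "indicator G w * Y n w" "ea w"] GYb[OF w] eab[OF w] by linarith
    have "indicator G w * Y n w * ea w \<le> B' * exp (p1/2)"
      using GYb[OF w] eab[OF w] by (intro mult_mono) auto
    moreover have "h k w = (indicator G w * Y n w * ea w) * (cc w * indicator (E k) w)"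
      unfolding h_def by simp
    moreover have "0 \<le> cc w * indicator (E k) w \<and> cc w * indicator (E k) w \<le> 1"
      using ccb[OF w] by (auto split: split_indicator)
    moreover note a
    ultimately show ?thesis
      using mult_left_le[of "cc w * indicator (E k) w" "indicator G w * Y n w * ea w"]
        mult_nonneg_nonneg[of "indicator G w * Y n w * ea w" "cc w * indicator (E k) w"]
      by linarith
  qed
  have Vb: "0 \<le> V k w \<and> V k w \<le> 1" for k w unfolding V_def by (auto split: split_indicator)
  have pw: "indicator G w * Y (Suc n) w \<le> indicator G w * Y n w * ea w - (\<Sum>k\<in>UNIV. h k w * V k w)"
    if w: "w \<in> space M" for w
  proof (cases "w \<in> G")
    case False
    then show ?thesis unfolding h_def by simp
  next
    case True
    define k0 where "k0 = I (X (Suc n) w)"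
    have Xs: "X (Suc n) w \<in> space lam" using Xspace w by auto
    have Vk: "V k w = (if k = k0 then 1 else 0)" for k
      unfolding V_def k0_def using Xs by (auto simp: stratum_def)
    have "(\<Sum>k\<in>UNIV. h k w * V k w) = (\<Sum>k\<in>UNIV. if k = k0 then h k w else 0)"
      unfolding Vk by (intro sum.cong) auto
    then have sumh: "(\<Sum>k\<in>UNIV. h k w * V k w) = h k0 w" by simp
    define t where "t = th n w $ k0"
    define r where "r = rho t"
    define g where "g = gm w"
    define y0 where "y0 = Y n w"
    define y1 where "y1 = Y (Suc n) w"
    define P where "P = (1 + g * r) ^ CARD('d)"
    define D where "D = 1 + g * (r / t)"
    have tb: "0 < t" "t < 1" using th_bounds[OF w] unfolding t_def by auto
    have rp: "0 < r" using rho_pos tb unfolding r_def by auto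
    have rle: "r \<le> Rb" using Rb tb unfolding r_def by auto
    have gp: "0 < g" using gpos[OF w] unfolding g_def .
    have y0p: "0 < y0" using Y_pos[OF w] unfolding y0_def .
    have YS: "y1 = y0 * P / D"
      using Y_Suc[OF w, of n] unfolding y1_def y0_def P_def D_def t_def r_def g_def gm_def k0_def by simp
    have Pea: "P \<le> ea w"
    proof -
      have "P \<le> exp (g * r) ^ CARD('d)" unfolding P_def
        using gp rp by (intro power_mono) (auto simp: exp_ge_add_one_self add_nonneg_nonneg)
      also have "\<dots> = exp (real CARD('d) * (g * r))" by (simp add: exp_of_nat_mult)
      also have "\<dots> \<le> exp (AA * gm w)"
      proof -
        have "real CARD('d) * (g * r) \<le> real CARD('d) * (g * Rb)"
          using rle gp by (intro mult_left_mono) auto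
        also have "\<dots> = AA * gm w" unfolding AA g_def by simp
        finally show ?thesis by simp
      qed
      finally show ?thesis unfolding ea_def .
    qed
    have D1: "1 \<le> D" unfolding D_def using gp rp tb by simp
    have eap: "0 < ea w" using eab[OF w] by simp
    show ?thesis
    proof (cases "w \<in> E k0")
      case True
      have mn: "\<forall>j. t \<le> th n w $ j" using True unfolding E_def t_def by auto
      have "y0 \<le> (1 / t) ^ CARD('d)" using Y_le_min[OF w mn[unfolded t_def]] unfolding y0_def t_def .
      moreover have "Kt \<le> y0" using G(2) \<open>w \<in> G\<close> unfolding y0_def by auto
      ultimately have "(1 / t0) ^ CARD('d) \<le> (1 / t) ^ CARD('d)" unfolding Kt by simp
      moreover have "0 < CARD('d)" using d2 by simp
      ultimately have "1 / t0 \<le> 1 / t" using power_mono_iff[of "1/t0" "1/t" "CARD('d)"] tb t0(1) by auto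
      then have tt0: "t \<le> t0" using tb t0(1) by (simp add: divide_le_eq_1 field_simps)
      have "L \<le> r / t" using t0(2) tb tt0 unfolding r_def by auto
      then have "g * L \<le> g * (r / t)" using gp by (intro mult_left_mono) auto
      then have DL: "1 + g * L \<le> D" unfolding D_def by linarith
      have gLp: "0 < 1 + g * L" using gp Lp by (simp add: add_pos_pos)
      have "y1 \<le> y0 * ea w / (1 + g * L)"
        unfolding YS using y0p Pea DL gLp D1 eap
        by (intro frac_le mult_left_mono) auto
      also have "\<dots> = y0 * ea w - y0 * ea w * cc w"
        unfolding cc_def g_def[symmetric] using gLp by (simp add: field_simps)
      finally have "y1 \<le> y0 * ea w - y0 * ea w * cc w" .
      moreover have "h k0 w = y0 * ea w * cc w" unfolding h_def y0_def using True \<open>w \<in> G\<close> by simp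
      ultimately show ?thesis unfolding sumh using \<open>w \<in> G\<close> unfolding y1_def y0_def by simp
    next
      case False
      have "y1 \<le> y0 * ea w / 1"
        unfolding YS using y0p Pea D1 eap by (intro frac_le mult_left_mono) auto
      moreover have "h k0 w = 0" unfolding h_def using False by simp
      ultimately show ?thesis unfolding sumh using \<open>w \<in> G\<close> unfolding y1_def y0_def by simp
    qed
  qed
  define Bc where "Bc = B' * exp (p1 / 2)"
  define f0 where "f0 w = indicator G w * Y n w * ea w" for w
  have f0b: "0 \<le> f0 w \<and> f0 w \<le> Bc" if w: "w \<in> space M" for w
  proof -
    have "0 \<le> indicator G w * Y n w * ea w"
      using mult_nonneg_nonneg[of "indicator G w * Y n w" "ea w"] GYb[OF w] eab[OF w] by linarith
    moreover have "indicator G w * Y n w * ea w \<le> B' * exp (p1/2)"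
      using GYb[OF w] eab[OF w] by (intro mult_mono) auto
    ultimately show ?thesis unfolding f0_def Bc_def by simp
  qed
  have f0M: "f0 \<in> borel_measurable M" unfolding f0_def[abs_def] using GM YM eaM by measurable
  have hVb: "0 \<le> h k w * V k w \<and> h k w * V k w \<le> Bc" if w: "w \<in> space M" for k w
    using hb[OF w, of k] Vb[of k w] mult_left_le[of "V k w" "h k w"] mult_nonneg_nonneg[of "h k w" "V k w"]
    unfolding Bc_def by linarith
  have sumb: "0 \<le> (\<Sum>k\<in>UNIV. h k w * V k w) \<and> (\<Sum>k\<in>UNIV. h k w * V k w) \<le> real CARD('d) * Bc"
    if w: "w \<in> space M" for w
  proof -
    have "(\<Sum>k\<in>UNIV. h k w * V k w) \<le> (\<Sum>k\<in>(UNIV::'d set). Bc)" using hVb[OF w] by (intro sum_mono) auto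
    moreover have "0 \<le> (\<Sum>k\<in>UNIV. h k w * V k w)" using hVb[OF w] by (intro sum_nonneg) auto
    ultimately show ?thesis by simp
  qed
  have hVM: "(\<lambda>w. h k w * V k w) \<in> borel_measurable M" for k using hM VM by measurable
  have hVi: "integrable M (\<lambda>w. h k w * V k w)" for k
    by (rule intb[OF hVM, where C=Bc]) (use hVb in auto)
  have f0i: "integrable M f0" by (rule intb[OF f0M, where C=Bc]) (use f0b in auto)
  have Y1i: "integrable M (\<lambda>w. indicator G w * Y (Suc n) w)"
  proof (rule intb[where C=Bc])
    show "(\<lambda>w. indicator G w * Y (Suc n) w) \<in> borel_measurable M" using GM YM by measurable
    show "\<forall>w\<in>space M. \<bar>indicator G w * Y (Suc n) w\<bar> \<le> Bc"
    proof
      fix w assume w: "w \<in> space M"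
      have "0 \<le> indicator G w * Y (Suc n) w" using Y_pos[OF w, of "Suc n"] by (simp split: split_indicator)
      moreover have "indicator G w * Y (Suc n) w \<le> f0 w"
        using pw[OF w] sumb[OF w] unfolding f0_def by linarith
      ultimately show "\<bar>indicator G w * Y (Suc n) w\<bar> \<le> Bc" using f0b[OF w] by simp
    qed
  qed
  have stepA: "(\<integral>w. indicator G w * Y (Suc n) w \<partial>M) \<le> (\<integral>w. f0 w - (\<Sum>k\<in>UNIV. h k w * V k w) \<partial>M)"
  proof (rule integral_mono[OF Y1i])
    show "integrable M (\<lambda>w. f0 w - (\<Sum>k\<in>UNIV. h k w * V k w))"
      using f0i hVi by (intro Bochner_Integration.integrable_diff integrable_sum) auto
    fix w assume w: "w \<in> space M"
    show "indicator G w * Y (Suc n) w \<le> f0 w - (\<Sum>k\<in>UNIV. h k w * V k w)"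
      unfolding f0_def by (rule pw[OF w])
  qed
  have stepB: "(\<integral>w. f0 w - (\<Sum>k\<in>UNIV. h k w * V k w) \<partial>M) = (\<integral>w. f0 w \<partial>M) - (\<Sum>k\<in>UNIV. \<integral>w. h k w * V k w \<partial>M)"
    using f0i hVi by (simp add: Bochner_Integration.integral_diff integral_sum)
  define CE where "CE k = real_cond_exp M (F n) (V k)" for k
  have stepC: "(\<integral>w. h k w * V k w \<partial>M) = (\<integral>w. h k w * CE k w \<partial>M)" for k
    unfolding CE_def using fms.real_cond_exp_intg(2)[OF hVi hF VM] by simp
  have CEi: "integrable M (\<lambda>w. h k w * CE k w)" for k
    unfolding CE_def using fms.real_cond_exp_intg(1)[OF hVi hF VM] .
  have hpi: "integrable M (\<lambda>w. h k w * p1)" for k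
  proof (intro integrable_mult_left)
    show "integrable M (h k)"
    proof (rule intb[OF hM, where C=Bc], intro ballI)
      fix w assume w: "w \<in> space M"
      show "\<bar>h k w\<bar> \<le> Bc" using hb[OF w, of k] unfolding Bc_def by simp
    qed
  qed
  have stepD: "(\<integral>w. h k w * p1 \<partial>M) \<le> (\<integral>w. h k w * CE k w \<partial>M)" for k
  proof (rule integral_mono_AE[OF hpi CEi])
    have ae: "AE w in M. CE k w = mh_kernel lam q (bias_density lam piX I rho (th n w)) (X n w) (stratum lam I k)"
      using cond_law[rule_format, of "stratum lam I k" n] strata_meas unfolding CE_def V_def[abs_def] by auto
    show "AE w in M. h k w * p1 \<le> h k w * CE k w"
    proof (rule AE_mp[OF ae], intro AE_I2 impI)
      fix w assume w: "w \<in> space M"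
        and ce: "CE k w = mh_kernel lam q (bias_density lam piX I rho (th n w)) (X n w) (stratum lam I k)"
      show "h k w * p1 \<le> h k w * CE k w"
      proof (cases "w \<in> E k")
        case True
        have mn: "\<forall>j. th n w $ k \<le> th n w $ j" using True unfolding E_def by auto
        have "p1 \<le> cq * theta_star lam piX I k / Bp" using p1(3) by auto
        also have "\<dots> \<le> CE k w" unfolding ce
          by (rule visit_prob[OF th_Theta[OF w] Xspace[OF w] mn cq Bp])
        finally show ?thesis using hb[OF w, of k] by (intro mult_left_mono) auto
      next
        case False
        then show ?thesis unfolding h_def by simp
      qed
    qed
  qed
  have ccM: "cc \<in> borel_measurable M" using eaM by auto
  have fcpi: "integrable M (\<lambda>w. f0 w * cc w * p1)"
  proof (rule intb[where C=Bc])
    show "(\<lambda>w. f0 w * cc w * p1) \<in> borel_measurable M" using f0M ccM by measurable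
    show "\<forall>w\<in>space M. \<bar>f0 w * cc w * p1\<bar> \<le> Bc"
    proof
      fix w assume w: "w \<in> space M"
      have a: "0 \<le> f0 w" "f0 w \<le> Bc" "0 \<le> cc w" "cc w \<le> 1" using f0b[OF w] ccb[OF w] by auto
      have "cc w * p1 \<le> 1" using a p1 mult_mono[of "cc w" 1 p1 1] by simp
      moreover have "0 \<le> cc w * p1" using a p1 by simp
      ultimately have "f0 w * (cc w * p1) \<le> f0 w" using a mult_left_le by blast
      moreover have "0 \<le> f0 w * (cc w * p1)" using a p1 by simp
      ultimately show "\<bar>f0 w * cc w * p1\<bar> \<le> Bc" using a by (simp add: mult.assoc)
    qed
  qed
  have stepE: "(\<integral>w. f0 w * cc w * p1 \<partial>M) \<le> (\<Sum>k\<in>UNIV. \<integral>w. h k w * p1 \<partial>M)"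
  proof -
    have "(\<Sum>k\<in>UNIV. \<integral>w. h k w * p1 \<partial>M) = (\<integral>w. (\<Sum>k\<in>UNIV. h k w * p1) \<partial>M)"
      using hpi by (simp add: integral_sum)
    moreover have "(\<integral>w. f0 w * cc w * p1 \<partial>M) \<le> (\<integral>w. (\<Sum>k\<in>UNIV. h k w * p1) \<partial>M)"
    proof (rule integral_mono[OF fcpi])
      show "integrable M (\<lambda>w. \<Sum>k\<in>UNIV. h k w * p1)" using hpi by (intro Bochner_Integration.integrable_sum) auto
      fix w assume w: "w \<in> space M"
      obtain ks where ks: "\<forall>j. th n w $ ks \<le> th n w $ j" using ex_minimizer by blast
      have wE: "w \<in> E ks" unfolding E_def using ks w by auto
      have hk: "h k w * p1 = (f0 w * cc w * p1) * indicator (E k) w" for k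
        unfolding h_def f0_def by simp
      have nn: "0 \<le> f0 w * cc w * p1" using f0b[OF w] ccb[OF w] p1 by simp
      have "(f0 w * cc w * p1) * indicator (E ks) w \<le> (\<Sum>k\<in>UNIV. (f0 w * cc w * p1) * indicator (E k) w)"
        using nn by (intro member_le_sum) auto
      then show "f0 w * cc w * p1 \<le> (\<Sum>k\<in>UNIV. h k w * p1)" unfolding hk using wE by simp
    qed
    ultimately show ?thesis by simp
  qed
  have GYi: "integrable M (\<lambda>w. indicator G w * Y n w)"
  proof (rule intb[where C=B'])
    show "(\<lambda>w. indicator G w * Y n w) \<in> borel_measurable M" using GM YM by measurable
    show "\<forall>w\<in>space M. \<bar>indicator G w * Y n w\<bar> \<le> B'"
    proof
      fix w assume w: "w \<in> space M"
      show "\<bar>indicator G w * Y n w\<bar> \<le> B'" using GYb[OF w] by (simp only: abs_of_nonneg)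
    qed
  qed
  have stepF: "(\<integral>w. f0 w \<partial>M) - (\<integral>w. f0 w * cc w * p1 \<partial>M) \<le> (\<integral>w. indicator G w * Y n w \<partial>M)"
  proof -
    have "(\<integral>w. f0 w \<partial>M) - (\<integral>w. f0 w * cc w * p1 \<partial>M) = (\<integral>w. f0 w - f0 w * cc w * p1 \<partial>M)"
      using f0i fcpi by (simp add: Bochner_Integration.integral_diff)
    also have "\<dots> \<le> (\<integral>w. indicator G w * Y n w \<partial>M)"
    proof (rule integral_mono[OF _ GYi])
      show "integrable M (\<lambda>w. f0 w - f0 w * cc w * p1)" using f0i fcpi by auto
      fix w assume w: "w \<in> space M"
      have k: "exp (AA * gm w) * (1 - gm w * L / (1 + gm w * L) * p1) \<le> 1"
        by (rule key_ineq[OF AAp p1(1) p1(2) gpos[OF w] gbd[OF w] L])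
      define yy where "yy = indicator G w * Y n w"
      have f0y: "f0 w = yy * ea w" unfolding f0_def yy_def ..
      have "f0 w - f0 w * cc w * p1 = yy * (ea w * (1 - cc w * p1))"
        unfolding f0y by (simp add: algebra_simps)
      then have "f0 w - f0 w * cc w * p1 = (indicator G w * Y n w) * (ea w * (1 - cc w * p1))"
        unfolding yy_def .
      also have "\<dots> \<le> (indicator G w * Y n w) * 1"
        using k GYb[OF w] unfolding ea_def cc_def by (intro mult_left_mono) auto
      finally show "f0 w - f0 w * cc w * p1 \<le> indicator G w * Y n w" by simp
    qed
    finally show ?thesis .
  qed
  have "(\<integral>w. indicator G w * Y (Suc n) w \<partial>M) \<le> (\<integral>w. f0 w \<partial>M) - (\<Sum>k\<in>UNIV. \<integral>w. h k w * V k w \<partial>M)"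
    using stepA stepB by simp
  also have "\<dots> = (\<integral>w. f0 w \<partial>M) - (\<Sum>k\<in>UNIV. \<integral>w. h k w * CE k w \<partial>M)"
    using stepC by simp
  also have "\<dots> \<le> (\<integral>w. f0 w \<partial>M) - (\<Sum>k\<in>UNIV. \<integral>w. h k w * p1 \<partial>M)"
    using stepD by (simp add: sum_mono)
  also have "\<dots> \<le> (\<integral>w. f0 w \<partial>M) - (\<integral>w. f0 w * cc w * p1 \<partial>M)"
    using stepE by simp
  also have "\<dots> \<le> (\<integral>w. indicator G w * Y n w \<partial>M)" by (rule stepF)
  finally show ?thesis .
qed


lemma Y_growth:
  assumes w: "w \<in> space M" and Rb: "\<forall>t\<in>{0<..<1}. rho t \<le> Rb"
  shows "Y (Suc n) w \<le> exp (real CARD('d) * Rb * gam (Suc n) w) * Y n w"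
proof -
  define k0 where "k0 = I (X (Suc n) w)"
  define t where "t = th n w $ k0"
  define r where "r = rho t"
  define g where "g = gam (Suc n) w"
  define y0 where "y0 = Y n w"
  define y1 where "y1 = Y (Suc n) w"
  define P where "P = (1 + g * r) ^ CARD('d)"
  define D where "D = 1 + g * (r / t)"
  have tb: "0 < t" "t < 1" using th_bounds[OF w] unfolding t_def by auto
  have rp: "0 < r" using rho_pos tb unfolding r_def by auto
  have rle: "r \<le> Rb" using Rb tb unfolding r_def by auto
  have gp: "0 < g" using gam_pos w unfolding g_def by auto
  have y0p: "0 < y0" using Y_pos[OF w] unfolding y0_def .
  have YS: "y1 = y0 * P / D"
    using Y_Suc[OF w, of n] unfolding y1_def y0_def P_def D_def t_def r_def g_def k0_def by simp
  have "P \<le> exp (g * r) ^ CARD('d)" unfolding P_def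
    using gp rp by (intro power_mono) (auto simp: exp_ge_add_one_self add_nonneg_nonneg)
  also have "\<dots> = exp (real CARD('d) * (g * r))" by (simp add: exp_of_nat_mult)
  also have "\<dots> \<le> exp (real CARD('d) * Rb * g)"
  proof -
    have "real CARD('d) * (g * r) \<le> real CARD('d) * (g * Rb)"
      using rle gp by (intro mult_left_mono) auto
    then show ?thesis by (simp add: mult.commute mult.left_commute)
  qed
  finally have Pe: "P \<le> exp (real CARD('d) * Rb * g)" .
  have D1: "1 \<le> D" unfolding D_def using gp rp tb by simp
  have "y1 \<le> y0 * exp (real CARD('d) * Rb * g) / 1"
    unfolding YS using y0p Pe D1 by (intro frac_le mult_left_mono) auto
  then show ?thesis unfolding y1_def y0_def g_def by (simp add: mult.commute)
qed

lemma final: "AE w in M. \<exists>K. compact K \<and> K \<subseteq> wl_Theta \<and> (\<exists>\<^sub>F n in sequentially. th n w \<in> K)"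
proof -
  interpret prob_space M by (rule prob)
  obtain cq where cq: "0 < cq" "\<forall>x\<in>space lam. \<forall>y\<in>space lam. cq \<le> q x y" using q_inf by auto
  obtain B0 where B0: "\<forall>x\<in>space lam. piX x \<le> B0" using A1_bdd by auto
  define Bp where "Bp = max 1 B0"
  have Bp: "1 \<le> Bp" "\<forall>x\<in>space lam. piX x \<le> Bp" using B0 unfolding Bp_def by auto
  define m where "m = Min (range (theta_star lam piX I))"
  have mr: "m \<in> range (theta_star lam piX I)" unfolding m_def by (intro Min_in) auto
  have mp: "0 < m" using mr A1_pos by auto
  have mle: "m \<le> theta_star lam piX I k" for k unfolding m_def by (intro Min_le) auto
  define p1 where "p1 = min (1/2) (cq * m / Bp)"
  have p1: "0 < p1" "p1 \<le> 1/2" "\<forall>k. p1 \<le> cq * theta_star lam piX I k / Bp"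
  proof -
    show "0 < p1" unfolding p1_def using cq mp Bp by simp
    show "p1 \<le> 1/2" unfolding p1_def by (rule min.cobounded1)
    show "\<forall>k. p1 \<le> cq * theta_star lam piX I k / Bp"
    proof
      fix k
      have "cq * m / Bp \<le> cq * theta_star lam piX I k / Bp"
        using mle[of k] cq Bp by (intro divide_right_mono mult_left_mono) auto
      then show "p1 \<le> cq * theta_star lam piX I k / Bp" unfolding p1_def by simp
    qed
  qed
  obtain Br where Br: "\<forall>t\<in>{0<..<1}. rho t \<le> Br" using R2 by auto
  define Rb where "Rb = max 1 Br"
  have Rb: "0 < Rb" "\<forall>t\<in>{0<..<1}. rho t \<le> Rb" using Br unfolding Rb_def by auto
  define AA where "AA = real CARD('d) * Rb"
  have AAp: "0 < AA" unfolding AA_def using Rb by simp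
  define L where "L = 4 * AA / p1"
  have "eventually (\<lambda>t. L \<le> rho t / t) (at_right 0)"
    using R4_lim unfolding filterlim_at_top by auto
  then obtain b where b: "0 < b" "\<forall>y>0. y < b \<longrightarrow> L \<le> rho y / y"
    unfolding eventually_at_right_field by auto
  define t0 where "t0 = b / 2"
  have t0: "0 < t0" "\<forall>t. 0 < t \<longrightarrow> t \<le> t0 \<longrightarrow> t < 1 \<longrightarrow> L \<le> rho t / t"
    using b unfolding t0_def by auto
  define Kt where "Kt = (1 / t0) ^ CARD('d)"
  obtain g where g: "g \<longlonglongrightarrow> 0" "\<forall>n\<ge>1. \<forall>w\<in>space M. gam n w \<le> g n" using gam_bound by auto
  have "eventually (\<lambda>n. g n < p1 / (2 * AA)) sequentially"
    using order_tendstoD(2)[OF g(1)] p1 AAp by simp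
  then obtain N0 where N0: "\<forall>n\<ge>N0. g n < p1 / (2 * AA)" unfolding eventually_sequentially by auto
  have "Bseq g" using g(1) by (intro convergent_imp_Bseq) (auto simp: convergent_def)
  then obtain Kg where Kg: "\<forall>n. norm (g n) \<le> Kg" by (auto elim!: BseqE)
  define Cg where "Cg = exp (AA * Kg)"
  have AE1: "AE w in M. \<exists>H. \<exists>\<^sub>F n in sequentially. Y n w \<le> H"
  proof (rule core_lemma[where F=F and Cg=Cg and ?N0.0=N0 and Kt=Kt])
    show "prob_space M" by (rule prob)
    show "\<forall>n. subalgebra M (F n)" by (rule filt_sub)
    show "\<forall>n. sets (F n) \<subseteq> sets (F (Suc n))" by (rule filt_mono)
    show "\<forall>n. (\<lambda>w. Y n w) \<in> borel_measurable (F n)" using Y_meas by auto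
    show "\<forall>n. \<forall>w\<in>space M. 0 \<le> Y n w" using Y_pos by (auto intro: less_imp_le)
    show "\<forall>n. \<forall>w\<in>space M. Y (Suc n) w \<le> Cg * Y n w"
    proof (intro allI ballI)
      fix n w assume w: "w \<in> space M"
      have "Y (Suc n) w \<le> exp (AA * gam (Suc n) w) * Y n w"
        using Y_growth[OF w Rb(2), of n] unfolding AA_def by (simp add: mult.assoc)
      also have "\<dots> \<le> Cg * Y n w"
      proof (rule mult_right_mono)
        have a1: "gam (Suc n) w \<le> g (Suc n)" using g(2) w by auto
        have a2: "\<bar>g (Suc n)\<bar> \<le> Kg" using Kg[rule_format, of "Suc n"] by simp
        have "gam (Suc n) w \<le> Kg" using a1 a2 abs_ge_self[of "g (Suc n)"] by linarith
        then have "AA * gam (Suc n) w \<le> AA * Kg" using AAp by (intro mult_left_mono) auto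
        then show "exp (AA * gam (Suc n) w) \<le> Cg" unfolding Cg_def by simp
      qed (use Y_pos[OF w, of n] in auto)
      finally show "Y (Suc n) w \<le> Cg * Y n w" .
    qed
    show "\<forall>n\<ge>N0. \<forall>G\<in>sets (F n). (\<forall>w\<in>G. Kt \<le> Y n w) \<longrightarrow> (\<exists>B. \<forall>w\<in>G. Y n w \<le> B) \<longrightarrow>
        (\<integral>w. indicator G w * Y (Suc n) w \<partial>M) \<le> (\<integral>w. indicator G w * Y n w \<partial>M)"
    proof (intro allI impI ballI)
      fix n G assume n: "N0 \<le> n" and G: "G \<in> sets (F n)" and GK: "\<forall>w\<in>G. Kt \<le> Y n w"
        and "\<exists>B. \<forall>w\<in>G. Y n w \<le> B"
      then obtain B where GB: "\<forall>w\<in>G. Y n w \<le> B" by auto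
      have gs: "\<forall>w\<in>space M. gam (Suc n) w \<le> p1 / (2 * AA)"
      proof
        fix w assume w: "w \<in> space M"
        have "gam (Suc n) w \<le> g (Suc n)" using g(2) w by auto
        moreover have "g (Suc n) < p1 / (2 * AA)" using N0 n by auto
        ultimately show "gam (Suc n) w \<le> p1 / (2 * AA)" by linarith
      qed
      show "(\<integral>w. indicator G w * Y (Suc n) w \<partial>M) \<le> (\<integral>w. indicator G w * Y n w \<partial>M)"
        by (rule super_step[OF cq Bp p1 Rb AA_def L_def t0 Kt_def gs G GK GB])
    qed
  qed
  show ?thesis
  proof (rule AE_mp[OF AE1], intro AE_I2 impI)
    fix w assume w: "w \<in> space M" and "\<exists>H. \<exists>\<^sub>F n in sequentially. Y n w \<le> H"
    then obtain H where H: "\<exists>\<^sub>F n in sequentially. Y n w \<le> H" by auto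
    obtain n0 where "Y n0 w \<le> H" using frequently_ex[OF H] by auto
    then have Hp: "0 < H" using Y_pos[OF w, of n0] by linarith
    define K where "K = {v::real^'d. (\<forall>j. 1 / H \<le> v $ j) \<and> (\<Sum>j\<in>UNIV. v $ j) = 1}"
    have "compact K" "K \<subseteq> wl_Theta" unfolding K_def using K_props[OF d2, of "1/H"] Hp by auto
    moreover have "\<exists>\<^sub>F n in sequentially. th n w \<in> K"
    proof (rule frequently_elim1[OF H])
      fix n assume Yn: "Y n w \<le> H"
      have "1 / H \<le> th n w $ j" for j
      proof -
        have tp: "0 < th n w $ j" using th_bounds[OF w] by auto
        have "1 / th n w $ j \<le> H" using Y_ge[OF w, of n j] Yn by linarith
        then show ?thesis using tp Hp by (simp add: field_simps)
      qed
      then show "th n w \<in> K" unfolding K_def using th_sum[OF w] by auto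
    qed
    ultimately show "\<exists>K. compact K \<and> K \<subseteq> wl_Theta \<and> (\<exists>\<^sub>F n in sequentially. th n w \<in> K)" by auto
  qed
qed

end

theorem proposition3p4:
  fixes M :: "'w measure" and F :: "nat \<Rightarrow> 'w measure"
    and lam :: "(real ^ 'D::finite) measure" and Xs :: "(real ^ 'D) set"
    and piX :: "real ^ 'D \<Rightarrow> real" and q :: "real ^ 'D \<Rightarrow> real ^ 'D \<Rightarrow> real"
    and I :: "real ^ 'D \<Rightarrow> 'd::finite" and rho :: "real \<Rightarrow> real"
    and th0 :: "'w \<Rightarrow> real ^ 'd" and X :: "nat \<Rightarrow> 'w \<Rightarrow> real ^ 'D"
    and gam :: "nat \<Rightarrow> 'w \<Rightarrow> real"
  assumes d2: "CARD('d) \<ge> 2"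
  (* state space, reference measure, target density, strata *)
    and Xs_meas: "Xs \<in> sets borel"
    and lam_sets: "sets lam = sets (restrict_space borel Xs)"
    and pi_meas: "piX \<in> borel_measurable lam"
    and pi_nonneg: "\<forall>x\<in>space lam. 0 \<le> piX x"
    and pi_prob: "(\<integral>\<^sup>+ x. ennreal (piX x) \<partial>lam) = 1"
    and strata_meas: "\<forall>i. stratum lam I i \<in> sets lam"
  (* A1 *)
    and A1_bdd: "\<exists>B. \<forall>x\<in>space lam. piX x \<le> B"
    and A1_pos: "\<forall>i. theta_star lam piX I i > 0"
  (* A2: symmetric proposal density bounded below *)
    and q_meas: "(\<lambda>(x, y). q x y) \<in> borel_measurable (lam \<Otimes>\<^sub>M lam)"
    and q_sym: "\<forall>x\<in>space lam. \<forall>y\<in>space lam. q x y = q y x"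
    and q_dens: "\<forall>x\<in>space lam. (\<integral>\<^sup>+ y. ennreal (q x y) \<partial>lam) = 1"
    and q_inf: "\<exists>c>0. \<forall>x\<in>space lam. \<forall>y\<in>space lam. c \<le> q x y"
  (* rho: measurable, positive; R2, R3, R4 *)
    and rho_meas: "rho \<in> borel_measurable (restrict_space borel {0<..<1})"
    and rho_pos: "\<forall>t\<in>{0<..<1}. 0 < rho t"
    and R2: "\<exists>B. \<forall>t\<in>{0<..<1}. rho t \<le> B"
    and R3_mono: "mono_on {0<..<1} rho"
    and R3_ratio: "\<exists>R>1. \<exists>c>0. \<forall>t\<in>{0<..<1/R}. c \<le> rho t / rho (R * t)"
    and R4_anti: "antimono_on {0<..<1} (\<lambda>t. rho t / t)"
    and R4_lim: "filterlim (\<lambda>t. rho t / t) at_top (at_right 0)"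
  (* probability space, filtration, WL_rho algorithm *)
    and prob: "prob_space M"
    and filt_sub: "\<forall>n. subalgebra M (F n)"
    and filt_mono: "\<forall>n. sets (F n) \<subseteq> sets (F (Suc n))"
    and th0_meas: "th0 \<in> borel_measurable (F 0)"
    and th0_pos: "\<forall>w\<in>space M. \<forall>i. 0 < th0 w $ i"
    and X_meas: "\<forall>n. X n \<in> measurable (F n) lam"
    and gam_meas: "\<forall>n. gam (Suc n) \<in> borel_measurable (F n)"
    and gam_pos: "\<forall>n\<ge>1. \<forall>w\<in>space M. 0 < gam n w"
    and cond_law: "\<forall>n. \<forall>A\<in>sets lam. AE w in M.
        real_cond_exp M (F n) (\<lambda>w. indicator A (X (Suc n) w)) w
        = mh_kernel lam q (bias_density lam piX I rho (wl_theta rho I th0 gam X n w)) (X n w) A"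
  (* stepsize conditions *)
    and gam_noninc: "\<forall>n\<ge>1. \<forall>w\<in>space M. gam (Suc n) w \<le> gam n w"
    and gam_bound: "\<exists>g::nat \<Rightarrow> real. g \<longlonglongrightarrow> 0 \<and> (\<forall>n\<ge>1. \<forall>w\<in>space M. gam n w \<le> g n)"
    and gam_ratio: "\<forall>w\<in>space M. \<exists>C. \<forall>n\<ge>1. gam n w / gam (n + CARD('d) - 1) w \<le> C"
  shows "AE w in M. \<exists>K. compact K \<and> K \<subseteq> wl_Theta \<and>
           (\<exists>\<^sub>F n in sequentially. wl_theta rho I th0 gam X n w \<in> K)"
proof -
  interpret wls M F lam Xs piX q I rho th0 X gam
    by (rule wls.intro) (fact assms)+
  show ?thesis by (rule final)
qed

end
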